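(* Let $K\ge2$, $t\in(0,1)$, $\xi(s)=(1+s)^K-1$, and let either $\xi_0(s)=t\xi(s)$ or $\xi_0(s)=\xi(ts)$. Then $\xi_0''(s)<\xi''(|s|)$ for all $s\in[-1,1]\setminus\{0\}$, and the functions $$\zeta_+(s)=\frac{\xi''(s)}{\xi''(s)+\xi_0''(s)},\qquad \zeta_-(s)=\frac{\xi''(s)}{\xi''(s)+\xi_0''(-s)}$$ are nondecreasing on $(0,1]$. *)

theory Defs
  imports "HOL-Analysis.Analysis"
begin

definition xi :: "nat \<Rightarrow> real \<Rightarrow> real" where
  "xi K s = (1 + s) ^ K - 1"

end

theory Submission imports Defs begin
definition gg :: "nat \<Rightarrow> real \<Rightarrow> real" where
  "gg K s = real K * real (K - 1) * (1 + s) ^ (K - 2)"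

lemma d1: "deriv (xi (Suc (Suc n))) = (\<lambda>s. real (Suc (Suc n)) * (1 + s) ^ Suc n)"
proof
  fix s :: real
  have "((\<lambda>s. (1 + s) ^ Suc (Suc n) - 1) has_field_derivative real (Suc (Suc n)) * (1 + s) ^ Suc n) (at s)"
    by (rule derivative_eq_intros refl)+ simp
  thus "deriv (xi (Suc (Suc n))) s = real (Suc (Suc n)) * (1 + s) ^ Suc n"
    unfolding xi_def by (rule DERIV_imp_deriv)
qed

lemma d2: "deriv (deriv (xi (Suc (Suc n)))) = gg (Suc (Suc n))"
proof
  fix s :: real
  have "((\<lambda>s. real (Suc (Suc n)) * (1 + s) ^ Suc n) has_field_derivative gg (Suc (Suc n)) s) (at s)"
    unfolding gg_def
    by (rule derivative_eq_intros refl)+ simp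
  thus "deriv (deriv (xi (Suc (Suc n)))) s = gg (Suc (Suc n)) s"
    unfolding d1 by (rule DERIV_imp_deriv)
qed

lemma e1: "deriv (\<lambda>s. t * xi (Suc (Suc n)) s) = (\<lambda>s. t * (real (Suc (Suc n)) * (1 + s) ^ Suc n))"
proof
  fix s :: real
  have "((\<lambda>s. t * ((1 + s) ^ Suc (Suc n) - 1)) has_field_derivative t * (real (Suc (Suc n)) * (1 + s) ^ Suc n)) (at s)"
    by (rule derivative_eq_intros refl)+ simp
  thus "deriv (\<lambda>s. t * xi (Suc (Suc n)) s) s = t * (real (Suc (Suc n)) * (1 + s) ^ Suc n)"
    unfolding xi_def by (rule DERIV_imp_deriv)
qed

lemma e2: "deriv (deriv (\<lambda>s. t * xi (Suc (Suc n)) s)) = (\<lambda>s. t * gg (Suc (Suc n)) s)"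
proof
  fix s :: real
  have "((\<lambda>s. t * (real (Suc (Suc n)) * (1 + s) ^ Suc n)) has_field_derivative t * gg (Suc (Suc n)) s) (at s)"
    unfolding gg_def
    by (rule derivative_eq_intros refl)+ simp
  thus "deriv (deriv (\<lambda>s. t * xi (Suc (Suc n)) s)) s = t * gg (Suc (Suc n)) s"
    unfolding e1 by (rule DERIV_imp_deriv)
qed

lemma f1: "deriv (\<lambda>s. xi (Suc (Suc n)) (t * s)) = (\<lambda>s. t * (real (Suc (Suc n)) * (1 + t * s) ^ Suc n))"
proof
  fix s :: real
  have "((\<lambda>s. (1 + t * s) ^ Suc (Suc n) - 1) has_field_derivative t * (real (Suc (Suc n)) * (1 + t * s) ^ Suc n)) (at s)"
    by (rule derivative_eq_intros refl)+ (simp add: algebra_simps)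
  thus "deriv (\<lambda>s. xi (Suc (Suc n)) (t * s)) s = t * (real (Suc (Suc n)) * (1 + t * s) ^ Suc n)"
    unfolding xi_def by (rule DERIV_imp_deriv)
qed

lemma f2: "deriv (deriv (\<lambda>s. xi (Suc (Suc n)) (t * s))) = (\<lambda>s. t^2 * gg (Suc (Suc n)) (t * s))"
proof
  fix s :: real
  have "((\<lambda>s. t * (real (Suc (Suc n)) * (1 + t * s) ^ Suc n)) has_field_derivative t^2 * gg (Suc (Suc n)) (t * s)) (at s)"
    unfolding gg_def
    by (rule derivative_eq_intros refl)+ (simp add: algebra_simps power2_eq_square)
  thus "deriv (deriv (\<lambda>s. xi (Suc (Suc n)) (t * s))) s = t^2 * gg (Suc (Suc n)) (t * s)"
    unfolding f1 by (rule DERIV_imp_deriv)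
qed

lemma gg_eq: "gg (Suc (Suc n)) s = (real (Suc (Suc n)) * real (Suc n)) * (1 + s) ^ n"
  unfolding gg_def by simp

lemma key:
  fixes a b p q c k :: real
  assumes "0 \<le> a * b" "a * b \<le> p * q" "0 \<le> k"
  shows "c * a ^ n * (k * (c * b ^ n)) \<le> c * p ^ n * (k * (c * q ^ n))"
proof -
  have "(a * b) ^ n \<le> (p * q) ^ n" using assms by (intro power_mono)
  hence "(c * c * k) * (a * b) ^ n \<le> (c * c * k) * (p * q) ^ n"
    using assms(3) by (intro mult_left_mono) auto
  thus ?thesis by (simp add: power_mult_distrib algebra_simps)
qed

lemma ratio_mono:
  fixes a1 a2 b1 b2 :: real
  assumes "a1 > 0" "a2 > 0" "b1 \<ge> 0" "b2 \<ge> 0" "a1 * b2 \<le> a2 * b1"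
  shows "a1 / (a1 + b1) \<le> a2 / (a2 + b2)"
proof -
  have "a1 * (a2 + b2) \<le> a2 * (a1 + b1)" using assms(5) by (simp add: algebra_simps)
  moreover have "a1 + b1 > 0" "a2 + b2 > 0" using assms by auto
  ultimately show ?thesis by (simp add: field_simps)
qed

lemma mono_ratio:
  fixes A B :: "real \<Rightarrow> real"
  assumes "\<And>x. x \<in> {0<..1} \<Longrightarrow> A x > 0" "\<And>x. x \<in> {0<..1} \<Longrightarrow> B x \<ge> 0"
    "\<And>x y. x \<in> {0<..1} \<Longrightarrow> y \<in> {0<..1} \<Longrightarrow> x \<le> y \<Longrightarrow> A x * B y \<le> A y * B x"
  shows "mono_on {0<..1} (\<lambda>s. A s / (A s + B s))"
  unfolding mono_on_def using assms ratio_mono by blast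


lemma gg_pos: "-1 < s \<Longrightarrow> gg (Suc (Suc n)) s > 0"
  unfolding gg_eq by simp

lemma gg_nonneg: "-1 \<le> s \<Longrightarrow> gg (Suc (Suc n)) s \<ge> 0"
  unfolding gg_eq by simp

lemma gg_le: "0 \<le> 1 + a \<Longrightarrow> a \<le> b \<Longrightarrow> gg (Suc (Suc n)) a \<le> gg (Suc (Suc n)) b"
  unfolding gg_eq by (intro mult_left_mono power_mono) auto

theorem lemma2:
  fixes K :: nat and t :: real and xi0 :: "real \<Rightarrow> real"
  assumes "K \<ge> 2" and "0 < t" and "t < 1"
    and "xi0 = (\<lambda>s. t * xi K s) \<or> xi0 = (\<lambda>s. xi K (t * s))"
  shows "(\<forall>s\<in>{-1..1} - {0}. deriv (deriv xi0) s < deriv (deriv (xi K)) \<bar>s\<bar>)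
    \<and> mono_on {0<..1} (\<lambda>s. deriv (deriv (xi K)) s /
                               (deriv (deriv (xi K)) s + deriv (deriv xi0) s))
    \<and> mono_on {0<..1} (\<lambda>s. deriv (deriv (xi K)) s /
                               (deriv (deriv (xi K)) s + deriv (deriv xi0) (- s)))"
proof -
  obtain n where K: "K = Suc (Suc n)" using assms(1) by (metis add_2_eq_Suc le_Suc_ex)
  let ?G = "gg (Suc (Suc n))"
  have D: "deriv (deriv (xi K)) = ?G" unfolding K by (rule d2)
  have t2: "t^2 < 1" "0 < t^2"
  proof -
    have "t * t < 1 * 1" using assms(2,3) by (intro mult_strict_mono) auto
    thus "t^2 < 1" by (simp add: power2_eq_square)
    show "0 < t^2" using assms(2) by simp
  qed
  show ?thesis
  proof (cases "xi0 = (\<lambda>s. t * xi K s)")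
    case True
    have H: "deriv (deriv xi0) = (\<lambda>s. t * ?G s)" unfolding True K by (rule e2)
    show ?thesis unfolding D H
    proof (intro conjI ballI mono_ratio)
      fix s :: real assume s: "s \<in> {-1..1} - {0}"
      have "?G s \<le> ?G \<bar>s\<bar>" using s by (intro gg_le) auto
      moreover have "?G \<bar>s\<bar> > 0" by (intro gg_pos) auto
      ultimately have "t * ?G s \<le> t * ?G \<bar>s\<bar>" "t * ?G \<bar>s\<bar> < 1 * ?G \<bar>s\<bar>"
        using assms(2,3) by (auto intro: mult_left_mono mult_strict_right_mono)
      thus "t * ?G s < ?G \<bar>s\<bar>" by simp
    next
      fix x y :: real assume "x \<in> {0<..1}" "y \<in> {0<..1}" "x \<le> y"
      show "?G x * (t * ?G y) \<le> ?G y * (t * ?G x)" by (simp add: algebra_simps)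
    next
      fix x y :: real assume xy: "x \<in> {0<..1}" "y \<in> {0<..1}" "x \<le> y"
      have "(1 + x) * (1 + -y) \<le> (1 + y) * (1 + -x)" using xy by (simp add: algebra_simps)
      moreover have "0 \<le> (1 + x) * (1 + -y)" using xy by (intro mult_nonneg_nonneg) auto
      ultimately show "?G x * (t * ?G (-y)) \<le> ?G y * (t * ?G (-x))"
        unfolding gg_eq using xy assms(2)
        by (intro key[of "1+x" "1+ -y" "1+y" "1+ -x" t]) (auto simp: algebra_simps)
    qed (use assms(2) in \<open>auto intro!: gg_pos gg_nonneg mult_nonneg_nonneg\<close>)
  next
    case False
    hence X: "xi0 = (\<lambda>s. xi K (t * s))" using assms(4) by auto
    have H: "deriv (deriv xi0) = (\<lambda>s. t^2 * ?G (t * s))" unfolding X K by (rule f2)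
    have ts: "\<bar>t * s\<bar> \<le> \<bar>s\<bar>" for s using assms(2,3) by (simp add: abs_mult mult_left_le_one_le)
    show ?thesis unfolding D H
    proof (intro conjI ballI mono_ratio)
      fix s :: real assume s: "s \<in> {-1..1} - {0}"
      have "?G (t * s) \<le> ?G \<bar>s\<bar>" using s ts[of s] by (intro gg_le) auto
      moreover have "?G \<bar>s\<bar> > 0" by (intro gg_pos) auto
      moreover have "?G (t * s) \<ge> 0" using s ts[of s] by (intro gg_nonneg) auto
      ultimately have "t^2 * ?G (t * s) \<le> t^2 * ?G \<bar>s\<bar>" "t^2 * ?G \<bar>s\<bar> < 1 * ?G \<bar>s\<bar>"
        using t2 by (auto intro: mult_left_mono mult_strict_right_mono)
      thus "t^2 * ?G (t * s) < ?G \<bar>s\<bar>" by simp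
    next
      fix x y :: real assume xy: "x \<in> {0<..1}" "y \<in> {0<..1}" "x \<le> y"
      have "(1 + x) * (1 + t * y) \<le> (1 + y) * (1 + t * x)"
      proof -
        have "0 \<le> (1 - t) * (y - x)" using xy assms(3) by auto
        thus ?thesis by (simp add: algebra_simps)
      qed
      thus "?G x * (t^2 * ?G (t * y)) \<le> ?G y * (t^2 * ?G (t * x))"
        unfolding gg_eq using xy assms(2)
        by (intro key[of "1+x" "1+t*y" "1+y" "1+t*x" "t^2"]) auto
    next
      fix x y :: real assume xy: "x \<in> {0<..1}" "y \<in> {0<..1}" "x \<le> y"
      have "(1 + x) * (1 + t * -y) \<le> (1 + y) * (1 + t * -x)"
      proof -
        have "0 \<le> (1 + t) * (y - x)" using xy assms(2) by auto
        thus ?thesis by (simp add: algebra_simps)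
      qed
      moreover have "0 \<le> (1 + x) * (1 + t * -y)"
        using xy assms(2,3) ts[of y] by (intro mult_nonneg_nonneg) (auto intro: mult_le_one)
      ultimately show "?G x * (t^2 * ?G (t * - y)) \<le> ?G y * (t^2 * ?G (t * - x))"
        unfolding gg_eq using xy
        by (intro key[of "1+x" "1+t*-y" "1+y" "1+t*-x" "t^2"]) auto
    qed (use assms(2,3) ts in \<open>auto intro!: gg_pos gg_nonneg mult_nonneg_nonneg mult_le_one intro: order_trans[OF _ mult_nonneg_nonneg[of t]]\<close>)
  qed
qed

end
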